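(* Let $r\geq 3$, $k\geq 4$, and let $D$ be an $m$-colored semicomplete $r$-partite digraph. Then $D$ has a $k$-colored kernel.
   Context: A semicomplete $r$-partite digraph ($r\ge 2$) is a digraph whose vertex set is partitioned into $r$ nonempty independent sets (partite sets) such that for any two vertices $u,v$ in different partite sets at least one of the arcs $(u,v)$, $(v,u)$ is present (both may be present); there are no arcs inside a partite set. An $m$-colored digraph is a digraph whose arcs are each assigned one of $m$ colors. A directed path (no repeated vertices) is $j$-colored if its arcs use exactly $j$ distinct colors. A $k$-colored kernel of $D$ is a nonempty set $K\subseteq V(D)$ such that (a) for every $u\in V(D)\setminus K$ there exist $v\in K$ and a $j$-colored directed path from $u$ to $v$ with $1\le j\le k$, and (b) for all distinct $u,v\in K$ there is no $j$-colored directed path from $u$ to $v$ with $1\le j\le k$. *)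

theory Defs
  imports Main
begin

definition digraph :: "'a set \<Rightarrow> ('a \<times> 'a) set \<Rightarrow> bool" where
  "digraph V A \<longleftrightarrow> finite V \<and> A \<subseteq> V \<times> V"

definition m_colored :: "('a \<times> 'a) set \<Rightarrow> nat \<Rightarrow> ('a \<times> 'a \<Rightarrow> nat) \<Rightarrow> bool" where
  "m_colored A m col \<longleftrightarrow> (\<forall>e\<in>A. col e < m)"

definition semicomplete_multipartite ::
    "'a set \<Rightarrow> ('a \<times> 'a) set \<Rightarrow> nat \<Rightarrow> (nat \<Rightarrow> 'a set) \<Rightarrow> bool" where
  "semicomplete_multipartite V A r P \<longleftrightarrow>
     (\<forall>i<r. P i \<noteq> {}) \<and>
     (\<Union>i<r. P i) = V \<and>
     (\<forall>i<r. \<forall>j<r. i \<noteq> j \<longrightarrow> P i \<inter> P j = {}) \<and>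
     (\<forall>i<r. \<forall>u\<in>P i. \<forall>v\<in>P i. (u, v) \<notin> A) \<and>
     (\<forall>i<r. \<forall>j<r. i \<noteq> j \<longrightarrow> (\<forall>u\<in>P i. \<forall>v\<in>P j. (u, v) \<in> A \<or> (v, u) \<in> A))"

definition dpath :: "('a \<times> 'a) set \<Rightarrow> 'a list \<Rightarrow> 'a \<Rightarrow> 'a \<Rightarrow> bool" where
  "dpath A p u v \<longleftrightarrow> length p \<ge> 2 \<and> distinct p \<and> hd p = u \<and> last p = v \<and>
     (\<forall>i < length p - 1. (p ! i, p ! Suc i) \<in> A)"

definition path_colors :: "('a \<times> 'a \<Rightarrow> 'c) \<Rightarrow> 'a list \<Rightarrow> 'c set" where
  "path_colors col p = (\<lambda>i. col (p ! i, p ! Suc i)) ` {..< length p - 1}"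

definition kpath :: "('a \<times> 'a) set \<Rightarrow> ('a \<times> 'a \<Rightarrow> 'c) \<Rightarrow> nat \<Rightarrow> 'a \<Rightarrow> 'a \<Rightarrow> bool" where
  "kpath A col k u v \<longleftrightarrow>
     (\<exists>p j. dpath A p u v \<and> card (path_colors col p) = j \<and> 1 \<le> j \<and> j \<le> k)"

definition k_colored_kernel ::
    "'a set \<Rightarrow> ('a \<times> 'a) set \<Rightarrow> ('a \<times> 'a \<Rightarrow> 'c) \<Rightarrow> nat \<Rightarrow> 'a set \<Rightarrow> bool" where
  "k_colored_kernel V A col k K \<longleftrightarrow>
     K \<noteq> {} \<and> K \<subseteq> V \<and>
     (\<forall>u \<in> V - K. \<exists>v \<in> K. kpath A col k u v) \<and>
     (\<forall>u \<in> K. \<forall>v \<in> K. u \<noteq> v \<longrightarrow> \<not> kpath A col k u v)"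

end

theory Submission
  imports Defs
begin

definition near :: "('a \<times> 'a) set \<Rightarrow> nat \<Rightarrow> 'a \<Rightarrow> 'a \<Rightarrow> bool" where
  "near A n u v \<longleftrightarrow> (\<exists>p. dpath A p u v \<and> length p \<le> Suc n)"

lemma near_mono: "near A n u v \<Longrightarrow> n \<le> n' \<Longrightarrow> near A n' u v"
  unfolding near_def by fastforce

lemma near1: "(u,v) \<in> A \<Longrightarrow> u \<noteq> v \<Longrightarrow> near A 1 u v"
  unfolding near_def dpath_def
  by (rule exI[of _ "[u,v]"]) auto

lemma near_step:
  assumes "(u,w) \<in> A" "near A n w v" "u \<noteq> v"
  shows "near A (Suc n) u v"
proof -
  obtain p where p: "dpath A p w v" "length p \<le> Suc n" using assms(2) near_def by metis
  have len: "length p \<ge> 2" "distinct p" "hd p = w" "last p = v"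
    and arcs: "\<forall>i < length p - 1. (p ! i, p ! Suc i) \<in> A" using p(1) by (auto simp: dpath_def)
  have pne: "p \<noteq> []" using len by auto
  show ?thesis
  proof (cases "u \<in> set p")
    case False
    have h0: "p ! 0 = w" using len pne by (simp add: hd_conv_nth)
    have "dpath A (u # p) u v"
      unfolding dpath_def
    proof (intro conjI)
      show "\<forall>i<length (u # p) - 1. ((u # p) ! i, (u # p) ! Suc i) \<in> A"
      proof (intro allI impI)
        fix i assume "i < length (u # p) - 1"
        then show "((u # p) ! i, (u # p) ! Suc i) \<in> A"
          using arcs h0 assms(1) by (cases i) auto
      qed
    qed (use len False pne in auto)
    then show ?thesis unfolding near_def using p(2) by (intro exI[of _ "u#p"]) auto
  next
    case True
    then obtain i where i: "i < length p" "p ! i = u" by (auto simp: in_set_conv_nth)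
    have "i \<noteq> length p - 1" using i len assms(3) pne by (metis last_conv_nth)
    with i have i2: "i < length p - 1" by auto
    have "dpath A (drop i p) u v"
      unfolding dpath_def
    proof (intro conjI)
      show "\<forall>j<length (drop i p) - 1. (drop i p ! j, drop i p ! Suc j) \<in> A"
        using arcs i2 by auto
    qed (use len i i2 pne in \<open>auto simp: hd_drop_conv_nth last_drop\<close>)
    then show ?thesis unfolding near_def using p(2) by (intro exI[of _ "drop i p"]) auto
  qed
qed

lemma near_kpath:
  assumes "near A n u v" "n \<le> k"
  shows "kpath A col k u v"
proof -
  obtain p where p: "dpath A p u v" "length p \<le> Suc n" using assms(1) near_def by metis
  have l: "length p \<ge> 2" using p(1) by (auto simp: dpath_def)
  have c1: "card (path_colors col p) \<le> length p - 1"
    unfolding path_colors_def by (metis card_image_le card_lessThan finite_lessThan)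
  have "0 \<in> {..< length p - 1}" using l by auto
  then have "path_colors col p \<noteq> {}" unfolding path_colors_def by blast
  moreover have "finite (path_colors col p)" unfolding path_colors_def by auto
  ultimately have c2: "card (path_colors col p) \<ge> 1" by (simp add: Suc_leI card_gt_0_iff)
  show ?thesis unfolding kpath_def using p c1 c2 assms(2) by (intro exI[of _ p]) auto
qed

lemma near_step2: "(u,w) \<in> A \<Longrightarrow> near A 1 w v \<Longrightarrow> u \<noteq> v \<Longrightarrow> near A 2 u v"
  using near_step[of u w A 1 v] by (simp add: numeral_2_eq_2)

lemma near_step3: "(u,w) \<in> A \<Longrightarrow> near A 2 w v \<Longrightarrow> u \<noteq> v \<Longrightarrow> near A 3 u v"
  using near_step[of u w A 2 v] by (simp add: numeral_3_eq_3 numeral_2_eq_2)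

lemma near_step4: "(u,w) \<in> A \<Longrightarrow> near A 3 w v \<Longrightarrow> u \<noteq> v \<Longrightarrow> near A 4 u v"
  using near_step[of u w A 3 v] by (simp add: numeral_Bit0)

theorem mainTheorem6:
  fixes V :: "'a set" and A :: "('a \<times> 'a) set" and col :: "'a \<times> 'a \<Rightarrow> nat"
    and P :: "nat \<Rightarrow> 'a set" and r k m :: nat
  assumes "digraph V A"
    and "m_colored A m col"
    and "semicomplete_multipartite V A r P"
    and "r \<ge> 3" and "k \<ge> 4"
  shows "\<exists>K. k_colored_kernel V A col k K"
proof -
  have finV: "finite V" and AV: "A \<subseteq> V \<times> V" using assms(1) by (auto simp: digraph_def)
  have sm1: "\<forall>i<r. P i \<noteq> {}" and sm2: "(\<Union>i<r. P i) = V"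
    and sm3: "\<forall>i<r. \<forall>j<r. i \<noteq> j \<longrightarrow> P i \<inter> P j = {}"
    and sm4: "\<forall>i<r. \<forall>u\<in>P i. \<forall>v\<in>P i. (u, v) \<notin> A"
    and sm5: "\<forall>i<r. \<forall>j<r. i \<noteq> j \<longrightarrow> (\<forall>u\<in>P i. \<forall>v\<in>P j. (u, v) \<in> A \<or> (v, u) \<in> A)"
    using assms(3) unfolding semicomplete_multipartite_def by blast+
  define sp where "sp u w \<longleftrightarrow> (\<exists>i<r. u \<in> P i \<and> w \<in> P i)" for u w
  have inV: "u \<in> V \<Longrightarrow> \<exists>i<r. u \<in> P i" for u using sm2 by blast
  have sp_refl: "sp u u" if "u \<in> V" for u using inV[OF that] unfolding sp_def by auto
  have sp_sym: "sp u w \<Longrightarrow> sp w u" for u w by (auto simp: sp_def)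
  have sp_trans: "sp a c" if ab: "sp a b" and bc: "sp b c" for a b c
  proof -
    obtain i where i: "i < r" "a \<in> P i" "b \<in> P i" using ab unfolding sp_def by auto
    obtain j where j: "j < r" "b \<in> P j" "c \<in> P j" using bc unfolding sp_def by auto
    have "i = j" using sm3 i j by blast
    then show ?thesis using i j unfolding sp_def by auto
  qed
  have adj: "(u,w) \<in> A \<or> (w,u) \<in> A" if h: "\<not> sp u w" "u \<in> V" "w \<in> V" for u w
  proof -
    obtain i where i: "i < r" "u \<in> P i" using inV h(2) by blast
    obtain j where j: "j < r" "w \<in> P j" using inV h(3) by blast
    have "i \<noteq> j" using h(1) i j unfolding sp_def by auto
    then show ?thesis using sm5 i j by blast
  qed
  have arc_sp: "\<not> sp u w" if "(u,w) \<in> A" for u w using sm4 that unfolding sp_def by blast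
  have arc_ne: "(u,w) \<in> A \<Longrightarrow> u \<noteq> w" for u w using arc_sp sp_refl AV by blast
  have nearA: "near A 1 u w" if "(u,w) \<in> A" for u w using near1[OF that arc_ne[OF that]] .
  have V0: "V \<noteq> {}"
  proof -
    have "P 0 \<noteq> {}" using sm1 assms(4) by auto
    moreover have "P 0 \<subseteq> V" using sm2 assms(4) by auto
    ultimately show ?thesis by auto
  qed
  show ?thesis
  proof (cases "\<exists>s\<in>V. \<forall>w. (s,w) \<notin> A")
    case True
    define S where "S = {s\<in>V. \<forall>w. (s,w) \<notin> A}"
    obtain s0 where s0: "s0 \<in> S" using True S_def by auto
    have "k_colored_kernel V A col k S"
      unfolding k_colored_kernel_def
    proof (intro conjI ballI impI)
      show "S \<noteq> {}" using s0 by auto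
      show "S \<subseteq> V" using S_def by auto
    next
      fix u assume u: "u \<in> V - S"
      then obtain y where y: "(u,y) \<in> A" using S_def by auto
      have s0V: "s0 \<in> V" and s0o: "\<forall>w. (s0,w) \<notin> A" using s0 S_def by auto
      have us0: "u \<noteq> s0" using u s0 by auto
      show "\<exists>v\<in>S. kpath A col k u v"
      proof (cases "sp u s0")
        case False
        then have "(u,s0) \<in> A" using adj u s0V s0o by auto
        then have "near A 1 u s0" by (rule nearA)
        then have "kpath A col k u s0" by (rule near_kpath) (use assms(5) in simp)
        then show ?thesis using s0 by blast
      next
        case True
        have yV: "y \<in> V" using y AV by auto
        have "\<not> sp y s0" using True arc_sp[OF y] sp_trans[of u s0 y] sp_sym[of y s0] by blast
        then have "(y,s0) \<in> A" using adj yV s0V s0o by auto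
        then have "near A 1 y s0" by (rule nearA)
        then have "near A 2 u s0" using near_step2[OF y] us0 by blast
        then have "kpath A col k u s0" by (rule near_kpath) (use assms(5) in simp)
        then show ?thesis using s0 by blast
      qed
    next
      fix u v assume "u \<in> S"
      then show "\<not> kpath A col k u v"
      proof -
        assume a: "u \<in> S"
        show ?thesis
        proof
          assume "kpath A col k u v"
          then obtain p where p: "dpath A p u v" unfolding kpath_def by blast
          then have "length p \<ge> 2" "hd p = u" "(p ! 0, p ! Suc 0) \<in> A"
            unfolding dpath_def by auto
          then have "(u, p ! Suc 0) \<in> A" by (metis hd_conv_nth list.size(3) not_numeral_le_zero)
          then show False using a S_def by auto
        qed
      qed
    qed
    then show ?thesis by blast
  next
    case False
    then have nosink: "\<forall>u\<in>V. \<exists>w. (u,w) \<in> A" by auto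
    define I where "I v = {w\<in>V. w \<noteq> v \<and> near A 2 w v}" for v
    have finI: "finite (I v)" for v using finV I_def by auto
    define M where "M = Max ((\<lambda>w. card (I w)) ` V)"
    have "M \<in> (\<lambda>w. card (I w)) ` V" unfolding M_def using finV V0 by auto
    then obtain v where vV: "v \<in> V" and vM: "card (I v) = M" by auto
    have vmax: "card (I w) \<le> card (I v)" if "w \<in> V" for w
      using vM M_def finV that by auto
    have case1: "near A 3 u v" if uV: "u \<in> V" and nsp: "\<not> sp u v" for u
    proof (rule ccontr)
      assume nn: "\<not> near A 3 u v"
      have uv: "u \<noteq> v" using nsp sp_refl uV by auto
      have nuv: "(u,v) \<notin> A" using nn near_mono[OF nearA, of u v 3] by auto
      have vu: "(v,u) \<in> A" using adj nsp uV vV nuv by auto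
      have uI: "u \<notin> I v" using nn near_mono[of A 2 u v 3] unfolding I_def by auto
      have sub: "insert v (I v) \<subseteq> I u"
      proof
        fix w assume w: "w \<in> insert v (I v)"
        show "w \<in> I u"
        proof (cases "w = v")
          case True
          then show ?thesis using near_mono[OF nearA[OF vu], of 2] I_def vV uv by auto
        next
          case False
          then have wI: "w \<in> I v" using w by auto
          have wu: "w \<noteq> u" using wI uI by auto
          have wV: "w \<in> V" using wI I_def by auto
          have "near A 2 w v" using wI I_def by auto
          then obtain p where p: "dpath A p w v" "length p \<le> 3" unfolding near_def
            by (auto simp: numeral_3_eq_3 numeral_2_eq_2)
          have l2: "length p \<ge> 2" and hp: "hd p = w" and lp: "last p = v"
            and arcs: "\<forall>i < length p - 1. (p ! i, p ! Suc i) \<in> A"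
            using p(1) by (auto simp: dpath_def)
          have "near A 2 w u"
          proof (cases "length p = 2")
            case True
            have "p ! 0 = w" using hp l2 by (cases p) auto
            moreover have "p ! 1 = v" using lp True l2 last_conv_nth[of p] by (cases p) auto
            moreover have "(p ! 0, p ! Suc 0) \<in> A" using arcs True by auto
            ultimately have wv: "(w,v) \<in> A" by simp
            show ?thesis
            proof (cases "sp w u")
              case True
              show ?thesis using near_step2[OF wv nearA[OF vu] wu] .
            next
              case False
              have "(u,w) \<notin> A"
              proof
                assume "(u,w) \<in> A"
                then show False using nn near_mono[OF near_step2[OF \<open>(u,w) \<in> A\<close> nearA[OF wv] uv], of 3] by simp
              qed
              then have "(w,u) \<in> A" using adj False wV uV by auto
              then show ?thesis using near_mono[OF nearA, of w u 2] by simp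
            qed
          next
            case False
            then have l3: "length p = 3" using l2 p(2) by auto
            define x where "x = p ! 1"
            have p0: "p ! 0 = w" using hp l2 by (cases p) auto
            have "last p = p ! (length p - 1)" using l2 by (intro last_conv_nth) auto
            then have p2: "p ! 2 = v" using lp l3 by simp
            have a0: "(p ! 0, p ! Suc 0) \<in> A" using arcs l3 by auto
            have a1: "(p ! 1, p ! Suc 1) \<in> A" using arcs l3 by auto
            have wx: "(w,x) \<in> A" using a0 p0 x_def by simp
            have xv: "(x,v) \<in> A" using a1 p2 x_def by (simp add: numeral_2_eq_2)
            have xV: "x \<in> V" using xv AV by auto
            have xu: "x \<noteq> u" using xv nn near_mono[OF nearA, of x v 3] by auto
            show ?thesis
            proof (cases "sp x u")
              case False
              have "(u,x) \<notin> A"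
              proof
                assume "(u,x) \<in> A"
                then show False using nn near_mono[OF near_step2[OF \<open>(u,x) \<in> A\<close> nearA[OF xv] uv], of 3] by simp
              qed
              then have "(x,u) \<in> A" using adj False xV uV by auto
              then show ?thesis by (rule near_step2[OF wx nearA wu])
            next
              case True
              have nwu: "\<not> sp w u" using True arc_sp[OF wx] sp_trans[of w u x] sp_sym[of x u] by blast
              have "(u,w) \<notin> A"
              proof
                assume uw: "(u,w) \<in> A"
                have "near A 2 w v" using wI I_def by auto
                then have "near A 3 u v" by (rule near_step3[OF uw _ uv])
                then show False using nn by simp
              qed
              then have "(w,u) \<in> A" using adj nwu wV uV by auto
              then show ?thesis using near_mono[OF nearA, of w u 2] by simp
            qed
          qed
          then show ?thesis using I_def wV wu by auto
        qed
      qed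
      have "v \<notin> I v" using I_def by auto
      then have "card (insert v (I v)) = Suc (card (I v))" using finI by auto
      moreover have "card (insert v (I v)) \<le> card (I u)" using sub finI by (rule card_mono[rotated])
      ultimately show False using vmax[OF uV] by auto
    qed
    have "k_colored_kernel V A col k {v}"
      unfolding k_colored_kernel_def
    proof (intro conjI ballI impI)
      fix u assume u: "u \<in> V - {v}"
      have "near A 4 u v"
      proof (cases "sp u v")
        case False
        then show ?thesis using case1[of u] u near_mono[of A 3 u v 4] by auto
      next
        case True
        obtain y where y: "(u,y) \<in> A" using nosink u by auto
        have yV: "y \<in> V" using y AV by auto
        have "\<not> sp y v" using True arc_sp[OF y] sp_trans[of u v y] sp_sym[of y v] by blast
        then have "near A 3 y v" using case1 yV by auto
        moreover have "u \<noteq> v" using u by auto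
        ultimately show ?thesis using near_step4[OF y] by blast
      qed
      then have "kpath A col k u v" by (rule near_kpath) (use assms(5) in simp)
      then show "\<exists>w\<in>{v}. kpath A col k u w" by blast
    qed (use vV in auto)
    then show ?thesis by blast
  qed
qed

end
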